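(* Let $n>2$ be an integer, $a\in\mathbb{R}$ with $a\ne0$, $b\in\{1,-1\}$ and $c\in\mathbb{R}$. Let $M=m_n(a,b,c)$ be the $(n+1)\times(n+1)$ symmetric matrix with rows/columns indexed $0,\dots,n$, $(0,0)$-entry $-nc$, $(0,j)$- and $(j,0)$-entries $b$ for $j=1,\dots,n$, and lower-right $n\times n$ block the circulant $\mathrm{circ}(c,a,0,\dots,0,a)$ (diagonal $c$, entries $a$ at positions $(j,j')$ with $j'\equiv j\pm1\pmod n$, zeros elsewhere). Put $\varphi=2\pi/n$, $q=\lfloor n/2\rfloor$ and \[c_k=\frac{4a^2\cos(k\varphi)\bigl(1-\cos(k\varphi)\bigr)+n}{2(n+1)a\bigl(\cos(k\varphi)-1\bigr)},\qquad k=1,\dots,q.\] Then the number of distinct eigenvalues of $M$ is \[|\sigma(M)|=\begin{cases}\lfloor n/2\rfloor+1,& \text{if } c\in\{c_1,\dots,c_q\},\\ \lfloor n/2\rfloor+2,&\text{otherwise.}\end{cases}\] *)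

theory Defs
  imports Complex_Main "Jordan_Normal_Form.Matrix" "Jordan_Normal_Form.Char_Poly"
begin

definition mn :: "nat \<Rightarrow> real \<Rightarrow> real \<Rightarrow> real \<Rightarrow> real mat" where
  "mn n a b c = mat (n+1) (n+1) (\<lambda>(i,j).
      if i = 0 \<and> j = 0 then - (real n * c)
      else if i = 0 \<or> j = 0 then b
      else if i = j then c
      else if (int i - int j) mod int n \<in> {1, int n - 1} then a
      else 0)"

definition ck :: "nat \<Rightarrow> real \<Rightarrow> nat \<Rightarrow> real" where
  "ck n a k = (let \<phi> = 2 * pi / real n in
     (4 * a^2 * cos (real k * \<phi>) * (1 - cos (real k * \<phi>)) + real n) /
     (2 * (real n + 1) * a * (cos (real k * \<phi>) - 1)))"

definition spectrum_set :: "real mat \<Rightarrow> real set" where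
  "spectrum_set M = {e. eigenvalue M e}"

end

theory Submission
  imports Defs
begin

definition prv :: "nat \<Rightarrow> nat \<Rightarrow> nat" where "prv n j = (if j = 1 then n else j - 1)"
definition nxt :: "nat \<Rightarrow> nat \<Rightarrow> nat" where "nxt n j = (if j = n then 1 else j + 1)"

lemma mod_char:
  assumes "n > 2" "1 \<le> j" "j \<le> n" "1 \<le> i" "i \<le> n" "i \<noteq> j"
  shows "((int j - int i) mod int n \<in> {1, int n - 1}) \<longleftrightarrow> (i = prv n j \<or> i = nxt n j)"
proof (cases "i < j")
  case True
  then have "(int j - int i) mod int n = int j - int i"
    using assms by (intro mod_pos_pos_trivial) auto
  then show ?thesis using True assms unfolding prv_def nxt_def by auto
next
  case False
  then have "(int j - int i) mod int n = int j - int i + int n"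
    using assms by (subst mod_add_self2[symmetric], intro mod_pos_pos_trivial) auto
  then show ?thesis using False assms unfolding prv_def nxt_def by auto
qed

lemma mn_carrier: "mn n a b c \<in> carrier_mat (n+1) (n+1)"
  unfolding mn_def by auto

lemma row_j:
  assumes "n > 2" "v \<in> carrier_vec (n+1)" "1 \<le> j" "j \<le> n"
  shows "(mn n a b c *\<^sub>v v) $ j = b * v$0 + c * v$j + a * v$(prv n j) + a * v$(nxt n j)"
proof -
  have P: "1 \<le> prv n j" "prv n j \<le> n" "1 \<le> nxt n j" "nxt n j \<le> n" "prv n j \<noteq> j" "nxt n j \<noteq> j"
     "prv n j \<noteq> nxt n j"
    using assms unfolding prv_def nxt_def by auto
  have "(mn n a b c *\<^sub>v v) $ j = (\<Sum>i\<in>{0..<n+1}. mn n a b c $$ (j,i) * v $ i)"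
    using assms mn_carrier[of n a b c] by (simp add: scalar_prod_def)
  also have "\<dots> = (\<Sum>i\<in>{0..<n+1}. (if i = 0 then b * v$0 else 0) + (if i = j then c * v$j else 0)
       + (if i = prv n j then a * v$(prv n j) else 0) + (if i = nxt n j then a * v$(nxt n j) else 0))"
  proof (rule sum.cong[OF refl])
    fix i assume i: "i \<in> {0..<n+1}"
    show "mn n a b c $$ (j,i) * v $ i = (if i = 0 then b * v$0 else 0) + (if i = j then c * v$j else 0)
       + (if i = prv n j then a * v$(prv n j) else 0) + (if i = nxt n j then a * v$(nxt n j) else 0)"
    proof (cases "i = 0 \<or> i = j")
      case True then show ?thesis using P assms i unfolding mn_def by auto
    next
      case False
      then have "mn n a b c $$ (j,i) = (if i = prv n j \<or> i = nxt n j then a else 0)"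
        using mod_char[of n j i] assms i unfolding mn_def by auto
      then show ?thesis using P False by auto
    qed
  qed
  also have "\<dots> = b * v$0 + c * v$j + a * v$(prv n j) + a * v$(nxt n j)"
    unfolding sum.distrib sum.delta using P assms by auto
  finally show ?thesis .
qed

lemma row_0:
  assumes "v \<in> carrier_vec (n+1)"
  shows "(mn n a b c *\<^sub>v v) $ 0 = - (real n * c) * v$0 + b * (\<Sum>j\<in>{1..n}. v$j)"
proof -
  have "(mn n a b c *\<^sub>v v) $ 0 = (\<Sum>i\<in>{0..<n+1}. mn n a b c $$ (0,i) * v $ i)"
    using assms mn_carrier[of n a b c] by (simp add: scalar_prod_def)
  also have "\<dots> = mn n a b c $$ (0,0) * v $ 0 + (\<Sum>i\<in>{1..n}. mn n a b c $$ (0,i) * v $ i)"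
    by (simp add: sum.atLeast_Suc_atMost atLeastLessThanSuc_atLeastAtMost)
  also have "\<dots> = - (real n * c) * v$0 + b * (\<Sum>j\<in>{1..n}. v$j)"
    unfolding mn_def by (simp add: sum_distrib_left)
  finally show ?thesis .
qed

lemma geo_zero:
  fixes z :: complex
  assumes "z ^ n = 1" "z \<noteq> 1"
  shows "(\<Sum>k<n. z ^ k) = 0" "(\<Sum>j\<in>{1..n}. z ^ j) = 0"
proof -
  show "(\<Sum>k<n. z ^ k) = 0" using assms by (simp add: sum_gp_strict)
  show "(\<Sum>j\<in>{1..n}. z ^ j) = 0" using assms by (simp add: sum_gp)
qed

lemma root_distinct:
  fixes \<omega> :: complex
  assumes "\<omega> ^ n = 1" "\<forall>m. 0 < m \<and> m < n \<longrightarrow> \<omega> ^ m \<noteq> 1"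
    "1 \<le> j" "j \<le> n" "1 \<le> l" "l \<le> n" "j \<noteq> l"
  shows "\<omega> ^ j \<noteq> \<omega> ^ l"
proof
  assume eq: "\<omega> ^ j = \<omega> ^ l"
  have "n \<noteq> 0" using assms(3,4) by simp
  then have nz: "\<omega> \<noteq> 0" using assms(1) by (cases "\<omega> = 0") (auto simp: power_0_left)
  {
    fix p q :: nat assume pq: "1 \<le> p" "p < q" "q \<le> n" "\<omega> ^ p = \<omega> ^ q"
    have "\<omega> ^ q = \<omega> ^ p * \<omega> ^ (q - p)" using pq by (metis le_add_diff_inverse less_imp_le power_add)
    then have "\<omega> ^ (q - p) = 1" using pq nz by simp
    moreover have "0 < q - p" "q - p < n" using pq by auto
    ultimately have False using assms(2) by blast
  }
  note * = this
  show False
  proof (cases "j < l")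
    case True then show False using *[of j l] eq assms by auto
  next
    case False then show False using *[of l j] eq assms by auto
  qed
qed

lemma inversion:
  fixes \<omega> :: complex and y :: "nat \<Rightarrow> real"
  assumes "\<omega> ^ n = 1" "\<forall>m. 0 < m \<and> m < n \<longrightarrow> \<omega> ^ m \<noteq> 1" "n > 0"
    and Y: "\<And>k. 1 \<le> k \<Longrightarrow> k < n \<Longrightarrow> (\<Sum>j\<in>{1..n}. of_real (y j) * (\<omega> ^ k) ^ j) = 0"
    and l: "1 \<le> l" "l \<le> n"
  shows "real n * y l = (\<Sum>j\<in>{1..n}. y j)"
proof -
  have nz: "\<omega> \<noteq> 0" using assms(1,3) by (metis power_0_left less_not_refl zero_neq_one)
  define r where "r = inverse (\<omega> ^ l)"
  define F where "F k = (\<Sum>j\<in>{1..n}. of_real (y j) * (\<omega> ^ k) ^ j)" for k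
  have "(\<Sum>k<n. F k * r ^ k) = (\<Sum>k<n. if k = 0 then F 0 else 0)"
  proof (rule sum.cong[OF refl])
    fix k assume "k \<in> {..<n}"
    then show "F k * r ^ k = (if k = 0 then F 0 else 0)" using Y[of k] by (cases "k = 0") (auto simp: F_def)
  qed
  also have "\<dots> = F 0" using assms(3) by simp
  finally have L: "(\<Sum>k<n. F k * r ^ k) = of_real (\<Sum>j\<in>{1..n}. y j)" by (simp add: F_def)
  have pow_swap: "(\<omega> ^ k) ^ j = (\<omega> ^ j) ^ k" for k j :: nat by (metis power_mult mult.commute)
  have "(\<Sum>k<n. F k * r ^ k) = (\<Sum>j\<in>{1..n}. of_real (y j) * (\<Sum>k<n. (\<omega> ^ j * r) ^ k))"
    unfolding F_def sum_distrib_right sum_distrib_left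
    apply (subst sum.swap)
    apply (rule sum.cong[OF refl])+
    by (simp add: power_mult_distrib pow_swap mult.commute mult.left_commute)
  also have "\<dots> = (\<Sum>j\<in>{1..n}. if j = l then of_real (y j) * of_nat n else 0)"
  proof (rule sum.cong[OF refl])
    fix j assume j: "j \<in> {1..n}"
    show "of_real (y j) * (\<Sum>k<n. (\<omega> ^ j * r) ^ k) = (if j = l then of_real (y j) * of_nat n else 0)"
    proof (cases "j = l")
      case True then show ?thesis using nz by (simp add: r_def)
    next
      case False
      have "(\<omega> ^ j * r) ^ n = 1"
        using pow_swap[of n j] pow_swap[of n l] assms(1)
        by (simp add: r_def power_mult_distrib power_inverse)
      moreover have "\<omega> ^ j * r \<noteq> 1" using root_distinct[OF assms(1,2), of j l] j l False nz
        by (auto simp: r_def field_simps)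
      ultimately show ?thesis using geo_zero(1) False by simp
    qed
  qed
  also have "\<dots> = of_real (y l) * of_nat n" using l by simp
  finally have "of_real (y l) * of_nat n = (of_real (\<Sum>j\<in>{1..n}. y j) :: complex)" using L by simp
  then have "of_real (y l * real n) = (of_real (\<Sum>j\<in>{1..n}. y j) :: complex)" by simp
  then show ?thesis using of_real_eq_iff by (metis mult.commute)
qed

lemma prv_nxt:
  assumes "n > 2" "1 \<le> i" "i \<le> n"
  shows "nxt n (prv n i) = i" "prv n (nxt n i) = i" "prv n i \<in> {1..n}" "nxt n i \<in> {1..n}"
  using assms unfolding prv_def nxt_def by auto

lemma fourier:
  fixes z :: complex
  assumes n: "n > 2" and v: "v \<in> carrier_vec (n+1)" and ev: "mn n a b c *\<^sub>v v = e \<cdot>\<^sub>v v"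
    and z: "z ^ n = 1" "z \<noteq> 1"
  shows "(\<Sum>j\<in>{1..n}. of_real (v$j) * z^j) * (a * z^2 + (c - e) * z + a) = 0"
proof -
  define Y where "Y = (\<Sum>j\<in>{1..n}. of_real (v$j) * z^j)"
  define A where "A = (\<Sum>j\<in>{1..n}. of_real (v$(prv n j)) * z^j)"
  define B where "B = (\<Sum>j\<in>{1..n}. of_real (v$(nxt n j)) * z^j)"
  have rows: "e * v$j = b*v$0 + c*v$j + a*v$(prv n j) + a*v$(nxt n j)" if "j \<in> {1..n}" for j
  proof -
    have "(mn n a b c *\<^sub>v v) $ j = (e \<cdot>\<^sub>v v) $ j" using ev by simp
    then show ?thesis using row_j[OF n v, of j a b c] that v by auto
  qed
  have "of_real e * Y = (\<Sum>j\<in>{1..n}. of_real (e * v$j) * z^j)"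
    unfolding Y_def sum_distrib_left by (simp add: mult.assoc)
  also have "\<dots> = (\<Sum>j\<in>{1..n}. of_real (b * v$0) * z^j + of_real c * (of_real (v$j) * z^j)
      + of_real a * (of_real (v$(prv n j)) * z^j) + of_real a * (of_real (v$(nxt n j)) * z^j))"
    by (rule sum.cong[OF refl], subst rows) (auto simp: algebra_simps)
  also have "\<dots> = of_real (b * v$0) * (\<Sum>j\<in>{1..n}. z^j) + of_real c * Y + of_real a * A + of_real a * B"
    unfolding Y_def A_def B_def by (simp add: sum.distrib sum_distrib_left)
  also have "(\<Sum>j\<in>{1..n}. z^j) = 0" using geo_zero(2)[OF z] .
  finally have E: "of_real e * Y = of_real c * Y + of_real a * A + of_real a * B" by simp
  have "A = (\<Sum>i\<in>{1..n}. of_real (v$i) * z^(nxt n i))"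
    unfolding A_def
    by (rule sum.reindex_bij_witness[of _ "nxt n" "prv n"]) (use prv_nxt[OF n] in auto)
  also have "\<dots> = z * Y" unfolding Y_def sum_distrib_left
  proof (rule sum.cong[OF refl])
    fix i assume i: "i \<in> {1..n}"
    have "z^(nxt n i) = z * z^i"
    proof (cases "i = n")
      case True then show ?thesis using z by (simp add: nxt_def)
    next
      case False then show ?thesis by (simp add: nxt_def)
    qed
    then show "of_real (v$i) * z^(nxt n i) = z * (of_real (v$i) * z^i)" by simp
  qed
  finally have A: "A = z * Y" .
  have "B = (\<Sum>i\<in>{1..n}. of_real (v$i) * z^(prv n i))"
    unfolding B_def
    by (rule sum.reindex_bij_witness[of _ "prv n" "nxt n"]) (use prv_nxt[OF n] in auto)
  then have "z * B = (\<Sum>i\<in>{1..n}. of_real (v$i) * (z * z^(prv n i)))"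
    by (simp add: sum_distrib_left algebra_simps)
  also have "\<dots> = Y" unfolding Y_def
  proof (rule sum.cong[OF refl])
    fix i assume i: "i \<in> {1..n}"
    have "z * z^(prv n i) = z^i"
    proof (cases "i = 1")
      case True then show ?thesis using z by (simp add: prv_def)
    next
      case False then have "i = Suc (i - 1)" using i by auto
      then show ?thesis using False by (metis power_Suc prv_def)
    qed
    then show "of_real (v$i) * (z * z^(prv n i)) = of_real (v$i) * z^i" by simp
  qed
  finally have B: "z * B = Y" .
  have "Y * (a * z^2 + (c - e) * z + a) = z * (of_real c * Y + of_real a * A + of_real a * B - of_real e * Y) + a * (Y - z * B)"
    by (simp add: A algebra_simps power2_eq_square)
  also have "\<dots> = 0" using E B by simp
  finally show ?thesis unfolding Y_def by simp
qed

lemma cos_per: "cos (x + 2 * real k * pi) = cos x"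
proof -
  have "sin (2 * real k * pi) = 0" using sin_npi[of "2*k"] by (simp add: mult.assoc)
  then show ?thesis by (simp add: cos_add)
qed

lemma omega_facts:
  assumes "n > 0"
  shows "cis (2*pi/real n) ^ n = 1"
    "\<And>m. 0 < m \<Longrightarrow> m < n \<Longrightarrow> cis (2*pi/real n) ^ m \<noteq> 1"
    "\<And>m. cis (2*pi/real n) ^ m = cis (real m * (2*pi/real n))"
proof -
  show pw: "\<And>m. cis (2*pi/real n) ^ m = cis (real m * (2*pi/real n))" by (rule DeMoivre)
  show "cis (2*pi/real n) ^ n = 1" using assms by (simp add: pw)
  fix m assume m: "0 < m" "m < n"
  show "cis (2*pi/real n) ^ m \<noteq> 1"
  proof
    assume "cis (2*pi/real n) ^ m = 1"
    then have "cos (real m * (2*pi/real n)) = 1" unfolding pw by (metis complex.sel(1) cis.sel(1) one_complex.sel(1))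
    then obtain i :: int where i: "real m * (2*pi/real n) = of_int i * 2 * pi" using cos_one_2pi_int by blast
    then have "real m = i * real n" using assms by (simp add: field_simps)
    then have "int m = i * int n" by (metis of_int_eq_iff of_int_mult of_int_of_nat_eq)
    moreover have "0 < int m" "int m < int n" using m by auto
    ultimately show False
    proof (cases "i \<le> 0")
      case True then have "i * int n \<le> 0" by (simp add: mult_nonpos_nonneg)
      then show False using \<open>int m = i * int n\<close> \<open>0 < int m\<close> by linarith
    next
      case False then have "1 * int n \<le> i * int n" by (intro mult_right_mono) auto
      then show False using \<open>int m = i * int n\<close> \<open>int m < int n\<close> by linarith
    qed
  qed
qed

lemma ev_imp:
  assumes n: "n > 2" and b: "b \<in> {1, -1}" and ev: "eigenvalue (mn n a b c) e"
  shows "(\<exists>k\<in>{1..n-1}. e = c + 2*a*cos(real k * (2*pi/real n))) \<or> (e + real n * c) * (e - c - 2*a) = real n"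
proof -
  have dr: "dim_row (mn n a b c) = n+1" using mn_carrier by blast
  obtain v where v: "v \<in> carrier_vec (n+1)" "v \<noteq> 0\<^sub>v (n+1)" and evv: "mn n a b c *\<^sub>v v = e \<cdot>\<^sub>v v"
    using ev unfolding eigenvalue_def eigenvector_def dr by blast
  have bsq: "b * b = 1" "b \<noteq> 0" using b by auto
  show ?thesis
  proof (cases "\<exists>k\<in>{1..n-1}. e = c + 2*a*cos(real k * (2*pi/real n))")
    case True then show ?thesis by blast
  next
    case False
    define \<omega> where "\<omega> = cis (2*pi/real n)"
    have n0: "n > 0" using n by simp
    note of = omega_facts[OF n0, folded \<omega>_def]
    have Y0: "(\<Sum>j\<in>{1..n}. of_real (v$j) * (\<omega>^k)^j) = 0" if k: "1 \<le> k" "k < n" for k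
    proof -
      define z where "z = \<omega>^k"
      define \<theta> where "\<theta> = real k * (2*pi/real n)"
      have zc: "z = cis \<theta>" unfolding z_def \<theta>_def using of(3) by simp
      have zn: "z^n = 1" unfolding z_def by (metis of(1) power_mult mult.commute power_one)
      have z1: "z \<noteq> 1" unfolding z_def using of(2) k by simp
      have F: "(\<Sum>j\<in>{1..n}. of_real (v$j) * z^j) * (a * z^2 + (c - e) * z + a) = 0"
        using fourier[OF n v(1) evv zn z1] by simp
      have Q: "a * z^2 + (c - e) * z + a \<noteq> 0"
      proof
        assume Q0: "a * z^2 + (c - e) * z + a = 0"
        have zz: "z * cis (-\<theta>) = 1" by (simp add: zc cis_mult)
        have "0 = (a * z^2 + (c - e) * z + a) * cis (-\<theta>)" using Q0 by simp
        also have "\<dots> = a * z * (z * cis (-\<theta>)) + (c - e) * (z * cis (-\<theta>)) + a * cis (-\<theta>)"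
          by (simp add: algebra_simps power2_eq_square)
        also have "\<dots> = a * cis \<theta> + (c - e) + a * cis (-\<theta>)" using zz zc by simp
        finally have "Re (a * cis \<theta> + (c - e) + a * cis (-\<theta>)) = 0" by simp
        then have "e = c + 2*a*cos \<theta>" by simp
        moreover have "k \<in> {1..n-1}" using k by auto
        ultimately show False using False unfolding \<theta>_def by blast
      qed
      show ?thesis using F Q unfolding z_def by simp
    qed
    define S where "S = (\<Sum>j\<in>{1..n}. v$j)"
    have vl: "v$l = S / real n" if "1 \<le> l" "l \<le> n" for l
      using inversion[OF of(1) _ n0 Y0 that] of(2) n0 unfolding S_def
      by (simp add: field_simps)
    define t where "t = S / real n"
    have St: "S = real n * t" unfolding t_def using n0 by simp
    have rj: "e * t = b * v$0 + c * t + a * t + a * t"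
    proof -
      have "(mn n a b c *\<^sub>v v) $ 1 = (e \<cdot>\<^sub>v v) $ 1" using evv by simp
      moreover have "prv n 1 \<in> {1..n}" "nxt n 1 \<in> {1..n}" using prv_nxt[OF n, of 1] n by auto
      ultimately show ?thesis using row_j[OF n v(1), of 1 a b c] v vl[of 1] vl[of "prv n 1"] vl[of "nxt n 1"] n
        unfolding t_def by auto
    qed
    have r0: "e * v$0 = - (real n * c) * v$0 + b * S"
    proof -
      have "(mn n a b c *\<^sub>v v) $ 0 = (e \<cdot>\<^sub>v v) $ 0" using evv by simp
      then show ?thesis using row_0[OF v(1), of a b c] v unfolding S_def by auto
    qed
    show ?thesis
    proof (cases "t = 0")
      case True
      then have "b * v$0 = 0" using rj by simp
      then have v00: "v$0 = 0" using bsq by simp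
      have "v = 0\<^sub>v (n+1)"
      proof (rule eq_vecI)
        fix i assume "i < dim_vec (0\<^sub>v (n+1) :: real vec)"
        then have i: "i < n+1" by simp
        show "v $ i = 0\<^sub>v (n+1) $ i"
        proof (cases "i = 0")
          case True then show ?thesis using v00 by simp
        next
          case False then show ?thesis using vl[of i] i \<open>t = 0\<close> unfolding t_def by simp
        qed
      qed (use v in simp)
      then show ?thesis using v by simp
    next
      case False
      have h1: "(e - c - 2*a) * t = b * v$0" using rj by (simp add: algebra_simps)
      have h2: "(e + real n * c) * v$0 = b * real n * t" using r0 St by (simp add: algebra_simps)
      have "(e + real n * c) * (e - c - 2*a) * t = (e + real n * c) * ((e - c - 2*a) * t)"
        by (simp add: algebra_simps)
      also have "\<dots> = b * ((e + real n * c) * v$0)" unfolding h1 by (simp add: algebra_simps)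
      also have "\<dots> = (b * b) * real n * t" using h2 by simp
      finally have "((e + real n * c) * (e - c - 2*a)) * t = real n * t" using bsq by simp
      then show ?thesis using False by simp
    qed
  qed
qed

lemma ev_cos:
  assumes n: "n > 2" and k: "1 \<le> k" "k < n"
  shows "eigenvalue (mn n a b c) (c + 2*a*cos(real k * (2*pi/real n)))"
proof -
  define \<theta> where "\<theta> = real k * (2*pi/real n)"
  have n0: "n > 0" using n by simp
  have nth: "real n * \<theta> = 2 * real k * pi" unfolding \<theta>_def using n0 by (simp add: field_simps)
  have cn: "cos (real n * \<theta>) = 1" unfolding nth by simp
  define v where "v = vec (n+1) (\<lambda>i. if i = 0 then 0 else cos (real i * \<theta>))"
  have vc: "v \<in> carrier_vec (n+1)" unfolding v_def by simp
  have vi: "v $ i = cos (real i * \<theta>)" if "1 \<le> i" "i \<le> n" for i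
    unfolding v_def using that by simp
  have v0: "v $ 0 = 0" unfolding v_def by simp
  have sumz: "(\<Sum>j\<in>{1..n}. cos (real j * \<theta>)) = 0"
  proof -
    have zc: "cis \<theta> = cis (2*pi/real n) ^ k" unfolding \<theta>_def by (simp add: DeMoivre)
    have zn: "cis \<theta> ^ n = 1" unfolding DeMoivre nth by (metis cis_multiple_2pi Ints_of_nat mult.assoc mult.commute)
    have z1: "cis \<theta> \<noteq> 1" unfolding zc using omega_facts(2)[OF n0, of k] k by simp
    have "(\<Sum>j\<in>{1..n}. cis \<theta> ^ j) = 0" using geo_zero(2)[OF zn z1] .
    then have "Re (\<Sum>j\<in>{1..n}. cis \<theta> ^ j) = 0" by simp
    then show ?thesis by (simp add: DeMoivre)
  qed
  have "mn n a b c *\<^sub>v v = (c + 2*a*cos \<theta>) \<cdot>\<^sub>v v"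
  proof (rule eq_vecI)
    fix i assume "i < dim_vec ((c + 2*a*cos \<theta>) \<cdot>\<^sub>v v)"
    then have i: "i < n+1" using vc by simp
    show "(mn n a b c *\<^sub>v v) $ i = ((c + 2*a*cos \<theta>) \<cdot>\<^sub>v v) $ i"
    proof (cases "i = 0")
      case True
      have "(\<Sum>j\<in>{1..n}. v$j) = (\<Sum>j\<in>{1..n}. cos (real j * \<theta>))" by (rule sum.cong) (auto simp: vi)
      then show ?thesis using row_0[OF vc, of a b c] v0 sumz True vc by simp
    next
      case False
      then have i1: "1 \<le> i" "i \<le> n" using i by auto
      have p: "v $ (prv n i) = cos (real i * \<theta> - \<theta>)"
      proof (cases "i = 1")
        case True then show ?thesis using vi[of n] n cn by (simp add: prv_def)
      next
        case False then show ?thesis using vi[of "i-1"] i1 by (simp add: prv_def of_nat_diff algebra_simps)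
      qed
      have q: "v $ (nxt n i) = cos (real i * \<theta> + \<theta>)"
      proof (cases "i = n")
        case True
        have "cos (real n * \<theta> + \<theta>) = cos \<theta>" unfolding nth using cos_per[of \<theta> k] by (simp add: add.commute)
        then show ?thesis using True vi[of 1] n by (simp add: nxt_def)
      next
        case False then show ?thesis using vi[of "i+1"] i1 by (simp add: nxt_def algebra_simps)
      qed
      define X where "X = real i * \<theta>"
      have cs: "cos (X - \<theta>) + cos (X + \<theta>) = 2 * cos X * cos \<theta>" by (simp add: cos_add cos_diff)
      have "(mn n a b c *\<^sub>v v) $ i = c * cos X + a * (cos (X - \<theta>) + cos (X + \<theta>))"
        using row_j[OF n vc i1, of a b c] p q v0 vi[OF i1] unfolding X_def by (simp add: distrib_left)
      also have "\<dots> = (c + 2*a*cos \<theta>) * cos X" unfolding cs by (simp add: distrib_right)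
      finally show ?thesis using vi[OF i1] vc i unfolding X_def by simp
    qed
  qed (use vc mn_carrier[of n a b c] in simp)
  moreover have "v \<noteq> 0\<^sub>v (n+1)"
  proof
    assume "v = 0\<^sub>v (n+1)"
    then have "v $ n = 0" by simp
    then show False using vi[of n] cn n by simp
  qed
  ultimately have "eigenvector (mn n a b c) v (c + 2*a*cos \<theta>)"
    unfolding eigenvector_def using vc mn_carrier[of n a b c] by auto
  then show ?thesis unfolding eigenvalue_def \<theta>_def by blast
qed

lemma ev_quad:
  assumes n: "n > 2" and b: "b \<in> {1, -1}" and p: "(e + real n * c) * (e - c - 2*a) = real n"
  shows "eigenvalue (mn n a b c) e"
proof -
  have bsq: "b * b = 1" using b by auto
  define v where "v = vec (n+1) (\<lambda>i. if i = 0 then b * (e - c - 2*a) else 1)"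
  have vc: "v \<in> carrier_vec (n+1)" unfolding v_def by simp
  have vi: "v $ i = 1" if "1 \<le> i" "i \<le> n" for i
    unfolding v_def using that by simp
  have v0: "v $ 0 = b * (e - c - 2*a)" unfolding v_def by simp
  have "mn n a b c *\<^sub>v v = e \<cdot>\<^sub>v v"
  proof (rule eq_vecI)
    fix i assume "i < dim_vec (e \<cdot>\<^sub>v v)"
    then have i: "i < n+1" using vc by simp
    show "(mn n a b c *\<^sub>v v) $ i = (e \<cdot>\<^sub>v v) $ i"
    proof (cases "i = 0")
      case True
      have "(\<Sum>j\<in>{1..n}. v $ j) = real n" using vi by simp
      then have "(mn n a b c *\<^sub>v v) $ 0 = - (real n * c) * (b * (e - c - 2*a)) + b * real n"
        using row_0[OF vc, of a b c] v0 by simp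
      also have "\<dots> = e * (b * (e - c - 2*a))"
      proof -
        have "b * ((e + real n * c) * (e - c - 2*a)) = b * real n" using p by simp
        then show ?thesis by (simp add: algebra_simps)
      qed
      finally show ?thesis using True v0 vc by simp
    next
      case False
      then have i1: "1 \<le> i" "i \<le> n" using i by auto
      have "prv n i \<in> {1..n}" "nxt n i \<in> {1..n}" using prv_nxt[OF n i1] by auto
      then have "(mn n a b c *\<^sub>v v) $ i = (b * b) * (e - c - 2*a) + c + a + a"
        using row_j[OF n vc i1, of a b c] v0 vi[OF i1] vi by (simp add: algebra_simps)
      then show ?thesis using bsq vi[OF i1] vc i by simp
    qed
  qed (use vc mn_carrier[of n a b c] in simp)
  moreover have "v \<noteq> 0\<^sub>v (n+1)"
  proof
    assume "v = 0\<^sub>v (n+1)"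
    then have "v $ 1 = 0" using n by simp
    then show False using vi[of 1] n by simp
  qed
  ultimately have "eigenvector (mn n a b c) v e"
    unfolding eigenvector_def using vc mn_carrier[of n a b c] by auto
  then show ?thesis unfolding eigenvalue_def by blast
qed

lemma f_inj:
  fixes x y a N :: real
  assumes "x < 1" "y < 1" "a \<noteq> 0" "N > 0"
    and eq: "(4*a^2*x*(1-x) + N) / (2*(N+1)*a*(x-1)) = (4*a^2*y*(1-y) + N) / (2*(N+1)*a*(y-1))"
  shows "x = y"
proof -
  have d1: "2*(N+1)*a*(x-1) \<noteq> 0" "2*(N+1)*a*(y-1) \<noteq> 0" using assms by auto
  from eq have "(4*a^2*x*(1-x) + N) * (2*(N+1)*a*(y-1)) = (4*a^2*y*(1-y) + N) * (2*(N+1)*a*(x-1))"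
    using d1 by (simp add: divide_eq_eq eq_divide_eq)
  then have E: "(2*(N+1)*a) * ((4*a^2*x*(1-x) + N) * (y-1)) = (2*(N+1)*a) * ((4*a^2*y*(1-y) + N) * (x-1))"
    by (simp add: algebra_simps)
  have nz: "2*(N+1)*a \<noteq> 0" using assms by auto
  have E2: "(4*a^2*x*(1-x) + N) * (y-1) = (4*a^2*y*(1-y) + N) * (x-1)"
    using E nz by (metis mult_left_cancel)
  have "(x - y) * (4*a^2*((x-1)*(y-1)) + N) = (4*a^2*y*(1-y) + N) * (x-1) - (4*a^2*x*(1-x) + N) * (y-1)"
    by (simp add: algebra_simps power2_eq_square)
  also have "\<dots> = 0" using E2 by simp
  finally have P: "(x - y) * (4*a^2*((x-1)*(y-1)) + N) = 0" .
  have "(x-1)*(y-1) > 0" using assms by (intro mult_neg_neg) auto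
  moreover have "a^2 > 0" using assms by simp
  ultimately have "4*a^2*((x-1)*(y-1)) + N > 0" using assms by (simp add: add_pos_pos)
  then show ?thesis using P by simp
qed

lemma cos_facts:
  assumes n: "n > 2" and k: "1 \<le> k" "k \<le> n div 2"
  shows "0 < real k * (2*pi/real n)" "real k * (2*pi/real n) \<le> pi" "cos (real k * (2*pi/real n)) < 1"
proof -
  have n0: "real n > 0" using n by simp
  show p0: "0 < real k * (2*pi/real n)" using k n0 by simp
  have "2 * k \<le> n" using k by auto
  then have "2 * real k \<le> real n" by linarith
  then have "real k * (2*pi) \<le> pi * real n" by (simp add: algebra_simps)
  then show pl: "real k * (2*pi/real n) \<le> pi" using n0 by (simp add: field_simps)
  show "cos (real k * (2*pi/real n)) < 1"
  proof (rule ccontr)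
    assume "\<not> ?thesis"
    then have "cos (real k * (2*pi/real n)) = cos 0" using cos_le_one by (simp add: antisym not_less)
    then have "real k * (2*pi/real n) = 0" using cos_inj_pi[of "real k * (2*pi/real n)" 0] p0 pl by simp
    then show False using p0 by linarith
  qed
qed

theorem theorem5:
  fixes n :: nat and a b c :: real
  assumes "n > 2" and "a \<noteq> 0" and "b \<in> {1, -1}"
  shows "card (spectrum_set (mn n a b c)) =
           (if c \<in> ck n a ` {1..n div 2} then n div 2 + 1 else n div 2 + 2)"
proof -
  note n = assms(1) and a0 = assms(2) and b = assms(3)
  define \<phi> where "\<phi> = 2*pi/real n"
  define q where "q = n div 2"
  define g where "g k = c + 2*a*cos(real k * \<phi>)" for k :: nat
  define L where "L = g ` {1..q}"
  define R where "R = {e. (e + real n * c) * (e - c - 2*a) = real n}"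
  have n0: "real n > 0" using n by simp
  have \<phi>0: "\<phi> > 0" unfolding \<phi>_def using n0 by simp
  have qn: "q \<le> n - 1" unfolding q_def using n by auto
  have cf: "0 < real k * \<phi>" "real k * \<phi> \<le> pi" "cos (real k * \<phi>) < 1" if "k \<in> {1..q}" for k
    using cos_facts[OF n, of k] that unfolding \<phi>_def q_def by auto
  have Lsym: "g k \<in> L" if k: "k \<in> {1..n-1}" for k
  proof (cases "k \<le> q")
    case True then show ?thesis using k unfolding L_def by auto
  next
    case False
    then have nk: "n - k \<in> {1..q}" using k unfolding q_def by auto
    have "k \<le> n" using k by auto
    then have "real (n - k) = real n - real k" by (simp add: of_nat_diff)
    then have "real (n - k) * \<phi> = 2 * pi - real k * \<phi>"
      using n0 unfolding \<phi>_def by (simp add: field_simps)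
    then have "g (n - k) = g k" unfolding g_def by simp
    then show ?thesis using nk unfolding L_def by (metis imageI)
  qed
  have spec: "spectrum_set (mn n a b c) = L \<union> R"
  proof (rule Set.set_eqI, rule iffI)
    fix e assume "e \<in> spectrum_set (mn n a b c)"
    then have "eigenvalue (mn n a b c) e" unfolding spectrum_set_def by simp
    from ev_imp[OF n b this] show "e \<in> L \<union> R"
      using Lsym unfolding R_def g_def \<phi>_def by auto
  next
    fix e assume "e \<in> L \<union> R"
    then show "e \<in> spectrum_set (mn n a b c)"
    proof
      assume "e \<in> L"
      then obtain k where k: "k \<in> {1..q}" "e = g k" unfolding L_def by auto
      then have "1 \<le> k" "k < n" using qn n by auto
      from ev_cos[OF n this, of a b c] show ?thesis using k unfolding spectrum_set_def g_def \<phi>_def by simp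
    next
      assume "e \<in> R"
      then show ?thesis using ev_quad[OF n b, of e c a] unfolding spectrum_set_def R_def by simp
    qed
  qed
  have injg: "inj_on g {1..q}"
  proof
    fix j k assume j: "j \<in> {1..q}" and k: "k \<in> {1..q}" and eq: "g j = g k"
    then have "cos (real j * \<phi>) = cos (real k * \<phi>)" using a0 unfolding g_def by simp
    then have "real j * \<phi> = real k * \<phi>" using cos_inj_pi cf[OF j] cf[OF k] by (meson less_imp_le)
    then show "j = k" using \<phi>0 by simp
  qed
  have cardL: "card L = q" unfolding L_def using card_image[OF injg] by simp
  define s where "s = c + 2*a - real n * c"
  define D where "D = (c + 2*a + real n * c)^2 + 4 * real n"
  define r where "r = sqrt D"
  have D0: "D > 0" unfolding D_def using n0 by (simp add: add_nonneg_pos)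
  have r0: "r > 0" unfolding r_def using D0 by simp
  have rr: "r * r = D" unfolding r_def using D0 by simp
  define \<mu>1 where "\<mu>1 = (s - r) / 2"
  define \<mu>2 where "\<mu>2 = (s + r) / 2"
  have key: "(e + real n * c) * (e - c - 2*a) - real n = (e - \<mu>1) * (e - \<mu>2)" for e
  proof -
    have "(e - \<mu>1) * (e - \<mu>2) = e*e - s*e + (s*s - r*r)/4"
      unfolding \<mu>1_def \<mu>2_def by (simp add: field_simps)
    also have "\<dots> = (e + real n * c) * (e - c - 2*a) - real n"
      unfolding rr D_def s_def by (simp add: field_simps power2_eq_square)
    finally show ?thesis by simp
  qed
  have R2: "R = {\<mu>1, \<mu>2}"
  proof -
    have "e \<in> R \<longleftrightarrow> (e - \<mu>1) * (e - \<mu>2) = 0" for e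
      unfolding R_def using key[of e] by auto
    then show ?thesis by auto
  qed
  have mu12: "\<mu>1 \<noteq> \<mu>2" unfolding \<mu>1_def \<mu>2_def using r0 by simp
  have cardR: "card R = 2" using R2 mu12 by simp
  have gR: "g k \<in> R \<longleftrightarrow> c = ck n a k" if k: "k \<in> {1..q}" for k
  proof -
    define x where "x = cos (real k * \<phi>)"
    have x1: "x - 1 \<noteq> 0" using cf[OF k] unfolding x_def by simp
    have den: "2 * (real n + 1) * a * (x - 1) \<noteq> 0" using x1 a0 n0 by simp
    have ckx: "ck n a k = (4 * a^2 * x * (1 - x) + real n) / (2 * (real n + 1) * a * (x - 1))"
      unfolding ck_def Let_def x_def \<phi>_def by simp
    have "g k \<in> R \<longleftrightarrow> ((real n + 1) * c + 2*a*x) * (2*a*(x - 1)) = real n"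
      unfolding R_def g_def x_def[symmetric] by (simp add: algebra_simps)
    also have "\<dots> \<longleftrightarrow> c * (2 * (real n + 1) * a * (x - 1)) = 4 * a^2 * x * (1 - x) + real n"
      by (simp add: algebra_simps power2_eq_square)
    also have "\<dots> \<longleftrightarrow> c = ck n a k" unfolding ckx using den by (simp add: eq_divide_eq)
    finally show ?thesis .
  qed
  have ckinj: "j = k" if "j \<in> {1..q}" "k \<in> {1..q}" "ck n a j = ck n a k" for j k
  proof -
    have "cos (real j * \<phi>) = cos (real k * \<phi>)"
      using f_inj[OF cf(3)[OF that(1)] cf(3)[OF that(2)] a0 n0] that(3)
      unfolding ck_def Let_def \<phi>_def by simp
    then have "real j * \<phi> = real k * \<phi>" using cos_inj_pi cf[OF that(1)] cf[OF that(2)] by (meson less_imp_le)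
    then show "j = k" using \<phi>0 by simp
  qed
  have LR: "L \<inter> R = g ` {k \<in> {1..q}. c = ck n a k}"
    unfolding L_def using gR by auto
  have fin: "finite L" "finite R" unfolding L_def using R2 by auto
  have U: "card (L \<union> R) = q + 2 - card (L \<inter> R)"
    using card_Un_Int[OF fin] cardL cardR by simp
  show ?thesis
  proof (cases "c \<in> ck n a ` {1..q}")
    case True
    then obtain k0 where k0: "k0 \<in> {1..q}" "c = ck n a k0" by auto
    then have "{k \<in> {1..q}. c = ck n a k} = {k0}" using ckinj by auto
    then have "card (L \<inter> R) = 1" unfolding LR by simp
    then show ?thesis using spec U True unfolding q_def by simp
  next
    case False
    then have "{k \<in> {1..q}. c = ck n a k} = {}" by auto
    then have "card (L \<inter> R) = 0" unfolding LR by simp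
    then show ?thesis using spec U False unfolding q_def by simp
  qed
qed

end
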